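(* There exists a finite graph (without loops or parallel edges) which is not the dual graph of any pure simplicial complex.
   Context: A simplicial complex is pure if all its inclusion-maximal faces (facets) have the same dimension. The dual graph of a pure simplicial complex $\Delta$ has a vertex for each facet of $\Delta$, and two facets are adjacent iff they share a face of dimension one less than that of the facets. *)

theory Defs
  imports Main
begin

definition simplicial_complex :: "'v set set \<Rightarrow> bool" where
  "simplicial_complex \<Delta> \<longleftrightarrow> (\<forall>F\<in>\<Delta>. finite F) \<and> (\<forall>F\<in>\<Delta>. \<forall>G. G \<subseteq> F \<longrightarrow> G \<in> \<Delta>)"

definition facets :: "'v set set \<Rightarrow> 'v set set" where
  "facets \<Delta> = {F \<in> \<Delta>. \<forall>G\<in>\<Delta>. F \<subseteq> G \<longrightarrow> G = F}"

definition pure :: "'v set set \<Rightarrow> bool" where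
  "pure \<Delta> \<longleftrightarrow> (\<forall>F\<in>facets \<Delta>. \<forall>G\<in>facets \<Delta>. card F = card G)"

text \<open>Adjacency in the dual graph: two distinct facets sharing a face of
  dimension one less than that of the facets (dimension = cardinality - 1).\<close>
definition dual_adj :: "'v set set \<Rightarrow> 'v set \<Rightarrow> 'v set \<Rightarrow> bool" where
  "dual_adj \<Delta> F G \<longleftrightarrow> F \<in> facets \<Delta> \<and> G \<in> facets \<Delta> \<and> F \<noteq> G \<and>
     (\<exists>H\<in>\<Delta>. H \<subseteq> F \<and> H \<subseteq> G \<and> card H + 1 = card F)"

definition simple_graph :: "'a set \<Rightarrow> ('a \<Rightarrow> 'a \<Rightarrow> bool) \<Rightarrow> bool" where
  "simple_graph V E \<longleftrightarrow> finite V \<and> (\<forall>x y. E x y \<longrightarrow> x \<in> V \<and> y \<in> V) \<and>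
     (\<forall>x y. E x y \<longrightarrow> E y x) \<and> (\<forall>x. \<not> E x x)"

definition is_dual_graph_of :: "'a set \<Rightarrow> ('a \<Rightarrow> 'a \<Rightarrow> bool) \<Rightarrow> 'v set set \<Rightarrow> bool" where
  "is_dual_graph_of V E \<Delta> \<longleftrightarrow> (\<exists>f. bij_betw f V (facets \<Delta>) \<and>
     (\<forall>x\<in>V. \<forall>y\<in>V. E x y \<longleftrightarrow> dual_adj \<Delta> (f x) (f y)))"

end

theory Submission
  imports Defs
begin

lemma adj_char:
  assumes sc: "simplicial_complex \<Delta>" and X: "X \<in> facets \<Delta>" and Y: "Y \<in> facets \<Delta>"
    and cXY: "card X = card Y" and ne: "X \<noteq> Y"
  shows "dual_adj \<Delta> X Y \<longleftrightarrow> card (X \<inter> Y) + 1 = card X"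
proof -
  have XD: "X \<in> \<Delta>" and YD: "Y \<in> \<Delta>" using X Y by (auto simp: facets_def)
  have fX: "finite X" and fY: "finite Y" using sc XD YD by (auto simp: simplicial_complex_def)
  have IX: "X \<inter> Y \<in> \<Delta>" using sc XD by (auto simp: simplicial_complex_def)
  have "\<not> X \<subseteq> Y"
  proof
    assume "X \<subseteq> Y" then have "X = Y" using card_subset_eq[OF fY] cXY by auto
    with ne show False by simp
  qed
  then have "X \<inter> Y \<subset> X" by auto
  then have lt: "card (X \<inter> Y) < card X" using fX by (simp add: psubset_card_mono)
  show ?thesis
  proof
    assume "dual_adj \<Delta> X Y"
    then obtain H where "H \<subseteq> X \<inter> Y" "card H + 1 = card X" by (auto simp: dual_adj_def)
    moreover have "card H \<le> card (X \<inter> Y)" using \<open>H \<subseteq> X \<inter> Y\<close> fX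
      by (simp add: card_mono)
    ultimately show "card (X \<inter> Y) + 1 = card X" using lt by linarith
  next
    assume "card (X \<inter> Y) + 1 = card X"
    then show "dual_adj \<Delta> X Y" using X Y ne IX unfolding dual_adj_def by blast
  qed
qed

lemma rep:
  assumes fF: "finite F" and fX: "finite X" and c: "card X = card F"
    and ci: "card (X \<inter> F) + 1 = card F"
  shows "\<exists>a b. a \<in> F \<and> b \<notin> F \<and> X = insert b (F - {a})"
proof -
  have "card (F - X) = card F - card (F \<inter> X)" using fF by (simp add: card_Diff_subset_Int)
  also have "F \<inter> X = X \<inter> F" by auto
  finally have "card (F - X) = 1" using ci by simp
  then obtain a where a: "F - X = {a}" by (metis card_1_singletonE)
  have "card (X - F) = card X - card (X \<inter> F)" using fX by (simp add: card_Diff_subset_Int)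
  then have "card (X - F) = 1" using ci c by simp
  then obtain b where b: "X - F = {b}" by (metis card_1_singletonE)
  have "X = insert b (F - {a})" using a b by blast
  moreover have "a \<in> F" "b \<notin> F" using a b by auto
  ultimately show ?thesis by blast
qed

lemma intcard:
  assumes fF: "finite F" and a: "a \<in> F" and a': "a' \<in> F" and b: "b \<notin> F" and b': "b' \<notin> F"
    and ne: "insert b (F - {a}) \<noteq> insert b' (F - {a'})"
  shows "card (insert b (F - {a}) \<inter> insert b' (F - {a'})) + 1 = card F \<longleftrightarrow> (a = a' \<or> b = b')"
proof (cases "a = a'")
  case True
  then have "b \<noteq> b'" using ne by auto
  then have "insert b (F - {a}) \<inter> insert b' (F - {a'}) = F - {a}" using True b b' by auto
  moreover have "card F > 0" using fF a card_gt_0_iff by blast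
  ultimately show ?thesis using True fF a by simp
next
  case False
  note F1 = False
  show ?thesis
  proof (cases "b = b'")
    case True
    then have e: "insert b (F - {a}) \<inter> insert b' (F - {a'}) = insert b (F - {a} - {a'})" by auto
    have "card (F - {a} - {a'}) + 2 = card F"
      using fF a a' F1 by (metis Suc_eq_plus1 add_2_eq_Suc' card_Suc_Diff1 finite_Diff insert_Diff insert_iff)
    then show ?thesis using e True b fF by simp
  next
    case False
    then have e: "insert b (F - {a}) \<inter> insert b' (F - {a'}) = F - {a} - {a'}" using b b' by auto
    have "card (F - {a} - {a'}) + 2 = card F"
      using fF a a' F1 by (metis Suc_eq_plus1 add_2_eq_Suc' card_Suc_Diff1 finite_Diff insert_Diff insert_iff)
    then show ?thesis using e False F1 by simp
  qed
qed


definition SE :: "(nat \<times> nat) set" where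
  "SE = {(0,1),(0,2),(0,3),(0,4),(1,2),(1,3),(1,4)}"

definition EE :: "nat \<Rightarrow> nat \<Rightarrow> bool" where
  "EE x y \<longleftrightarrow> (x,y) \<in> SE \<or> (y,x) \<in> SE"

theorem corollary4p2:
  shows "\<exists>(V :: nat set) E. simple_graph V E \<and>
           \<not> (\<exists>\<Delta> :: nat set set. finite \<Delta> \<and> simplicial_complex \<Delta> \<and> pure \<Delta> \<and>
                  is_dual_graph_of V E \<Delta>)"
proof (intro exI conjI)
  show "simple_graph {0..4} EE"
    unfolding simple_graph_def EE_def SE_def by auto
  show "\<not> (\<exists>\<Delta> :: nat set set. finite \<Delta> \<and> simplicial_complex \<Delta> \<and> pure \<Delta> \<and>
                  is_dual_graph_of {0..4} EE \<Delta>)"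
  proof
    assume "\<exists>\<Delta> :: nat set set. finite \<Delta> \<and> simplicial_complex \<Delta> \<and> pure \<Delta> \<and>
                  is_dual_graph_of {0..4} EE \<Delta>"
    then obtain \<Delta> :: "nat set set" and f where sc: "simplicial_complex \<Delta>" and pu: "pure \<Delta>"
      and bij: "bij_betw f {0..4} (facets \<Delta>)"
      and ad: "\<forall>x\<in>{0..4}. \<forall>y\<in>{0..4}. EE x y \<longleftrightarrow> dual_adj \<Delta> (f x) (f y)"
      unfolding is_dual_graph_of_def by blast
    have fac: "f x \<in> facets \<Delta>" if "x \<in> {0..4}" for x using bij that by (auto simp: bij_betw_def)
    have inj: "f x \<noteq> f y" if "x \<in> {0..4}" "y \<in> {0..4}" "x \<noteq> y" for x y
      using bij that by (auto simp: bij_betw_def inj_on_def)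
    have cd: "card (f x) = card (f y)" if "x \<in> {0..4}" "y \<in> {0..4}" for x y
      using pu fac that unfolding pure_def by blast
    have fin: "finite (f x)" if "x \<in> {0..4}" for x
      using fac[OF that] sc by (auto simp: facets_def simplicial_complex_def)
    have key: "EE x y \<longleftrightarrow> card (f x \<inter> f y) + 1 = card (f 0)"
      if "x \<in> {0..4}" "y \<in> {0..4}" "x \<noteq> y" for x y
      using ad that adj_char[OF sc fac[of x] fac[of y] cd[of x y] inj[of x y]] cd[of x 0] by auto
    define F where "F = f 0"
    have fF: "finite F" using fin[of 0] by (simp add: F_def)
    have R: "\<exists>a b. a \<in> F \<and> b \<notin> F \<and> f k = insert b (F - {a})" if "k \<in> {1..4}" for k
    proof -
      have "EE k 0" using that by (auto simp: EE_def SE_def)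
      then have "card (f k \<inter> F) + 1 = card F" using key[of k 0] that by (simp add: F_def)
      then show ?thesis using rep[OF fF fin[of k] _] cd[of k 0] that by (simp add: F_def)
    qed
    obtain a1 b1 where A1: "a1 \<in> F" "b1 \<notin> F" "f 1 = insert b1 (F - {a1})" using R[of 1] by auto
    obtain a2 b2 where A2: "a2 \<in> F" "b2 \<notin> F" "f 2 = insert b2 (F - {a2})" using R[of 2] by auto
    obtain a3 b3 where A3: "a3 \<in> F" "b3 \<notin> F" "f 3 = insert b3 (F - {a3})" using R[of 3] by auto
    obtain a4 b4 where A4: "a4 \<in> F" "b4 \<notin> F" "f 4 = insert b4 (F - {a4})" using R[of 4] by auto
    have P: "EE x y \<longleftrightarrow> (a = a' \<or> b = b')"
      if "x \<in> {0..4}" "y \<in> {0..4}" "x \<noteq> y" "a \<in> F" "b \<notin> F" "f x = insert b (F - {a})"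
        "a' \<in> F" "b' \<notin> F" "f y = insert b' (F - {a'})" for x y a b a' b'
      using key[OF that(1-3)] intcard[OF fF that(4) that(7) that(5) that(8)] inj[OF that(1-3)] that
      by (simp add: F_def)
    have e12: "a1 = a2 \<or> b1 = b2" using P[OF _ _ _ A1 A2] by (simp add: EE_def SE_def)
    have e13: "a1 = a3 \<or> b1 = b3" using P[OF _ _ _ A1 A3] by (simp add: EE_def SE_def)
    have e14: "a1 = a4 \<or> b1 = b4" using P[OF _ _ _ A1 A4] by (simp add: EE_def SE_def)
    have n23: "\<not> (a2 = a3 \<or> b2 = b3)" using P[OF _ _ _ A2 A3] by (simp add: EE_def SE_def)
    have n24: "\<not> (a2 = a4 \<or> b2 = b4)" using P[OF _ _ _ A2 A4] by (simp add: EE_def SE_def)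
    have n34: "\<not> (a3 = a4 \<or> b3 = b4)" using P[OF _ _ _ A3 A4] by (simp add: EE_def SE_def)
    show False using e12 e13 e14 n23 n24 n34 by blast
  qed
qed

end
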